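(* Suppose that for every atom $z$ of $L(\mathbb{R}^3)$ there exists a finite set $\Omega(z)$ of atoms of $L(\mathbb{R}^3)$ with $e_1,e_2,e_3,b_{12},b_{13},b_{23},z\in\Omega(z)$ such that every frame function $f$ on $\Omega(z)$ satisfying $f(e_i)=0$ ($1\le i\le 3$), $f(b_{ij})=0$ ($1\le i<j\le 3$) and $|f(x)|\le 1$ for all $x\in\Omega(z)$ also satisfies $|f(z)|\le \tfrac12$. Then every bounded frame function $f$ on the set of all atoms of $L(\mathbb{R}^3)$ satisfying $f(e_i)=0$ for all $i$ and $f(b_{ij})=0$ for all $i<j$ is identically zero.
   Context: $L(\mathbb{R}^3)$ denotes the lattice of subspaces of $\mathbb{R}^3$ (with its standard inner product); its atoms are the one-dimensional subspaces (rays). A frame function on a set $\Gamma$ of atoms of $L(\mathbb{R}^3)$ is a real function $f$ on $\Gamma$ for which there is a constant $C$ such that $f(x)+f(x')+f(x'')=C$ for every triple $x,x',x''$ of pairwise orthogonal atoms in $\Gamma$. Let $\vec{e_1}=(1,0,0)$, $\vec{e_2}=(0,1,0)$, $\vec{e_3}=(0,0,1)$ and $\vec{b_{ij}}=\frac{1}{\sqrt{2}}(\vec{e_i}+\vec{e_j})$ for $1\le i<j\le 3$. Let $e_i$ and $b_{ij}$ denote the rays spanned by these vectors. *)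

theory Defs
  imports "HOL-Analysis.Analysis"
begin

definition is_atom :: "(real^3) set \<Rightarrow> bool" where
  "is_atom x \<longleftrightarrow> (\<exists>v. v \<noteq> 0 \<and> x = span {v})"

definition atoms :: "(real^3) set set" where
  "atoms = {x. is_atom x}"

definition orth :: "(real^3) set \<Rightarrow> (real^3) set \<Rightarrow> bool" where
  "orth x y \<longleftrightarrow> (\<forall>u\<in>x. \<forall>v\<in>y. inner u v = 0)"

definition frame_function :: "(real^3) set set \<Rightarrow> ((real^3) set \<Rightarrow> real) \<Rightarrow> bool" where
  "frame_function \<Gamma> f \<longleftrightarrow>
     (\<exists>C. \<forall>x\<in>\<Gamma>. \<forall>x'\<in>\<Gamma>. \<forall>x''\<in>\<Gamma>.
        orth x x' \<and> orth x x'' \<and> orth x' x'' \<longrightarrow> f x + f x' + f x'' = C)"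

definition evec :: "nat \<Rightarrow> real^3" where
  "evec i = (\<chi> k. if k = of_nat i then 1 else 0)"

lemma evec_vals: "evec 1 = vector [1,0,0]" "evec 2 = vector [0,1,0]" "evec 3 = vector [0,0,1]"
  unfolding evec_def vector_def by (auto simp: vec_eq_iff forall_3)

definition e_at :: "nat \<Rightarrow> (real^3) set" where
  "e_at i = span {evec i}"

definition b_at :: "nat \<Rightarrow> nat \<Rightarrow> (real^3) set" where
  "b_at i j = span {(1 / sqrt 2) *\<^sub>R (evec i + evec j)}"

definition special_atoms :: "(real^3) set set" where
  "special_atoms = {e_at 1, e_at 2, e_at 3, b_at 1 2, b_at 1 3, b_at 2 3}"

end

theory Submission
  imports Defs
begin

lemma halve_step:
  assumes H: "\<forall>z\<in>atoms. \<exists>\<Omega>. finite \<Omega> \<and> \<Omega> \<subseteq> atoms \<and> special_atoms \<subseteq> \<Omega> \<and> z \<in> \<Omega> \<and>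
     (\<forall>f. frame_function \<Omega> f \<and> (\<forall>y\<in>special_atoms. f y = 0) \<and> (\<forall>x\<in>\<Omega>. \<bar>f x\<bar> \<le> 1)
          \<longrightarrow> \<bar>f z\<bar> \<le> 1/2)"
    and ff: "frame_function atoms f" and sp: "\<forall>y\<in>special_atoms. f y = 0"
    and bd: "\<forall>x\<in>atoms. \<bar>f x\<bar> \<le> M"
  shows "\<forall>x\<in>atoms. \<bar>f x\<bar> \<le> M / 2"
proof
  fix z assume z: "z \<in> atoms"
  show "\<bar>f z\<bar> \<le> M / 2"
  proof (cases "M > 0")
    case False
    have "\<bar>f z\<bar> \<le> M" using bd z by blast
    then show ?thesis using False by linarith
  next
    case True
    from bspec[OF H z] obtain \<Omega> where Om: "finite \<Omega> \<and> \<Omega> \<subseteq> atoms \<and> special_atoms \<subseteq> \<Omega> \<and> z \<in> \<Omega> \<and>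
     (\<forall>f. frame_function \<Omega> f \<and> (\<forall>y\<in>special_atoms. f y = 0) \<and> (\<forall>x\<in>\<Omega>. \<bar>f x\<bar> \<le> 1)
          \<longrightarrow> \<bar>f z\<bar> \<le> 1/2)" by (rule exE)
    have O: "\<Omega> \<subseteq> atoms" "z \<in> \<Omega>" using Om by simp_all
    have P: "\<forall>f. frame_function \<Omega> f \<and> (\<forall>y\<in>special_atoms. f y = 0) \<and> (\<forall>x\<in>\<Omega>. \<bar>f x\<bar> \<le> 1)
          \<longrightarrow> \<bar>f z\<bar> \<le> 1/2" using Om by (elim conjE)
    define g where "g = (\<lambda>x. f x / M)"
    from ff obtain C where C: "\<forall>x\<in>atoms. \<forall>x'\<in>atoms. \<forall>x''\<in>atoms.
        orth x x' \<and> orth x x'' \<and> orth x' x'' \<longrightarrow> f x + f x' + f x'' = C"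
      unfolding frame_function_def by blast
    have "frame_function \<Omega> g" unfolding frame_function_def
    proof (intro exI[of _ "C / M"] ballI impI)
      fix x x' x'' assume "x \<in> \<Omega>" "x' \<in> \<Omega>" "x'' \<in> \<Omega>" "orth x x' \<and> orth x x'' \<and> orth x' x''"
      then have "f x + f x' + f x'' = C" using C O \<open>x \<in> \<Omega>\<close> \<open>x' \<in> \<Omega>\<close> \<open>x'' \<in> \<Omega>\<close> by (meson subsetD)
      moreover have "g x + g x' + g x'' = (f x + f x' + f x'') / M" unfolding g_def by (simp add: add_divide_distrib)
      ultimately show "g x + g x' + g x'' = C / M" by simp
    qed
    moreover have "\<forall>y\<in>special_atoms. g y = 0" using sp by (simp add: g_def)
    moreover have "\<forall>x\<in>\<Omega>. \<bar>g x\<bar> \<le> 1"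
    proof
      fix x assume "x \<in> \<Omega>"
      then have "\<bar>f x\<bar> \<le> M" using bd O by blast
      then show "\<bar>g x\<bar> \<le> 1" using True by (simp add: g_def abs_divide)
    qed
    ultimately have Q: "frame_function \<Omega> g \<and> (\<forall>y\<in>special_atoms. g y = 0) \<and> (\<forall>x\<in>\<Omega>. \<bar>g x\<bar> \<le> 1)"
      by (intro conjI)
    from spec[OF P, of g] Q have "\<bar>g z\<bar> \<le> 1/2" by (rule mp)
    then have "\<bar>f z\<bar> / M \<le> 1/2" using True by (simp add: g_def abs_divide)
    then show ?thesis using True by (simp add: divide_le_eq)
  qed
qed

theorem mainTheorem2:
  assumes "\<forall>z\<in>atoms. \<exists>\<Omega>. finite \<Omega> \<and> \<Omega> \<subseteq> atoms \<and> special_atoms \<subseteq> \<Omega> \<and> z \<in> \<Omega> \<and>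
     (\<forall>f. frame_function \<Omega> f \<and> (\<forall>y\<in>special_atoms. f y = 0) \<and> (\<forall>x\<in>\<Omega>. \<bar>f x\<bar> \<le> 1)
          \<longrightarrow> \<bar>f z\<bar> \<le> 1/2)"
  shows "\<forall>f. frame_function atoms f \<and> (\<exists>M. \<forall>x\<in>atoms. \<bar>f x\<bar> \<le> M) \<and>
             (\<forall>y\<in>special_atoms. f y = 0) \<longrightarrow> (\<forall>x\<in>atoms. f x = 0)"
proof (intro allI impI ballI)
  fix f x assume A: "frame_function atoms f \<and> (\<exists>M. \<forall>x\<in>atoms. \<bar>f x\<bar> \<le> M) \<and>
             (\<forall>y\<in>special_atoms. f y = 0)" and x: "x \<in> atoms"
  then obtain M where M: "\<forall>x\<in>atoms. \<bar>f x\<bar> \<le> M" by blast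
  have N: "\<forall>x\<in>atoms. \<bar>f x\<bar> \<le> M / 2 ^ n" for n
  proof (induction n)
    case 0 then show ?case using M by simp
  next
    case (Suc n)
    have "\<forall>x\<in>atoms. \<bar>f x\<bar> \<le> (M / 2 ^ n) / 2"
      using halve_step[OF assms conjunct1[OF A] conjunct2[OF conjunct2[OF A]] Suc] .
    then show ?case by (simp add: field_simps)
  qed
  show "f x = 0"
  proof (rule ccontr)
    assume "f x \<noteq> 0"
    then have pos: "\<bar>f x\<bar> > 0" by simp
    obtain n where n: "M / \<bar>f x\<bar> < 2 ^ n" using real_arch_pow[of 2 "M / \<bar>f x\<bar>"] by auto
    then have "M < 2 ^ n * \<bar>f x\<bar>" using pos by (simp add: divide_less_eq)
    moreover have "\<bar>f x\<bar> \<le> M / 2 ^ n" using N x by blast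
    moreover have "\<bar>f x\<bar> * 2 ^ n \<le> M" using calculation(2) by (simp add: le_divide_eq)
    ultimately show False by (simp add: mult.commute)
  qed
qed

end
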